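(* Let $(\Omega,\mathcal{F},P)$ be an essentially purely $P$-atomic probability space and $(E,\mathcal P)$ a random locally convex module over $K$ with base $(\Omega,\mathcal F,P)$, and let $f:E\to L^0(\mathcal F,K)$ be a module homomorphism. Then $f\in E^\ast_{min}$ (i.e. $f$ is continuous from $(E,\mathcal T_{\varepsilon,\lambda})$ to $(L^0(\mathcal F,K),\mathcal T_c)$) if and only if there exist finitely many $P$-atoms $A_1,\dots,A_n$, elements $\xi_1,\dots,\xi_n\in L^0_+$ and $\mathcal Q_1,\dots,\mathcal Q_n\in\mathcal F(\mathcal P)$ such that $$|f(x)|\le\sum_{i=1}^{n}\tilde I_{A_i}\,\xi_i\,\|x\|_{\mathcal Q_i}\quad\text{for all }x\in E.$$
   Context: $(\Omega,\mathcal{F},P)$ is a probability space, $K=\mathbb{R}$ or $\mathbb{C}$, $L^{0}(\mathcal{F},K)$ is the algebra of equivalence classes (mod a.s. equality) of $K$-valued measurable random variables, ordered a.s.; $L^0_+$ the nonnegative ones, $L^0_{++}$ those $>0$ a.s.; $\tilde I_A$ is the class of the indicator of $A$. An $L^0$-seminorm on a left $L^0(\mathcal F,K)$-module $E$ is $\|\cdot\|:E\to L^0_+$ with $\|x+y\|\le\|x\|+\|y\|$ and $\|\xi x\|=|\xi|\|x\|$. A random locally convex module $(E,\mathcal P)$ is a left $L^0(\mathcal F,K)$-module with a family $\mathcal P$ of $L^0$-seminorms such that $\bigvee_{\|\cdot\|\in\mathcal P}\|x\|=0$ implies $x=0$. $\mathcal F(\mathcal P)$ is the set of finite subfamilies of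 $\mathcal P$, and $\|x\|_{\mathcal Q}=\bigvee_{\|\cdot\|\in\mathcal Q}\|x\|$. $\mathcal T_{\varepsilon,\lambda}$ on $E$ has local base at $0$ the sets $\{x:P\{\omega:\|x\|_{\mathcal Q}(\omega)<\varepsilon\}>1-\lambda\}$ ($\mathcal Q\in\mathcal F(\mathcal P)$, $\varepsilon>0$, $0<\lambda<1$). $\mathcal T_c$ on $E$: $G$ open iff for each $x\in G$ there are $\mathcal Q\in\mathcal F(\mathcal P)$, $\varepsilon\in L^0_{++}$ with $x+\{y:\|y\|_{\mathcal Q}\le\varepsilon\}\subset G$. $L^0(\mathcal F,K)$ is regarded as a random locally convex module with $\mathcal P=\{|\cdot|\}$. A $P$-atom is $A\in\mathcal F$ with $P(A)>0$ such that every measurable $B\subset A$ has $P(B)=0$ or $P(A\setminus B)=0$. $(\Omega,\mathcal F,P)$ is essentially purely $P$-atomic if there is an at most countable family $\{A_n\}$ of disjoint atoms with $\Omega=\bigcup_n A_n$ such that every $A\in\mathcal F$ differs by a null set from some set in the $\sigma$-algebra generated by $\{A_n\}$. *)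

theory Defs
  imports "HOL-Probability.Probability"
begin

text \<open>Elements of L0(F,K) are represented by F-measurable functions; two representatives
  denote the same class iff they agree almost everywhere.  All statements about
  L0-valued quantities are made up to a.e. equality.\<close>

definition P_atom :: "'a measure \<Rightarrow> 'a set \<Rightarrow> bool" where
  "P_atom M A \<longleftrightarrow> A \<in> sets M \<and> measure M A > 0 \<and>
     (\<forall>B\<in>sets M. B \<subseteq> A \<longrightarrow> measure M B = 0 \<or> measure M (A - B) = 0)"

definition ess_purely_atomic :: "'a measure \<Rightarrow> bool" where
  "ess_purely_atomic M \<longleftrightarrow>
     (\<exists>\<A>. countable \<A> \<and> disjoint \<A> \<and> (\<forall>A\<in>\<A>. P_atom M A) \<and> \<Union>\<A> = space M \<and>
        (\<forall>A\<in>sets M. \<exists>B\<in>sigma_sets (space M) \<A>. (A - B) \<union> (B - A) \<in> null_sets M))"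

definition is_L0_module ::
  "'a measure \<Rightarrow> (('a \<Rightarrow> 'k::{real_normed_field,second_countable_topology}) \<Rightarrow> 'e::ab_group_add \<Rightarrow> 'e) \<Rightarrow> bool" where
  "is_L0_module M sm \<longleftrightarrow>
     (\<forall>\<xi>\<in>borel_measurable M. \<forall>x y. sm \<xi> (x + y) = sm \<xi> x + sm \<xi> y) \<and>
     (\<forall>\<xi>\<in>borel_measurable M. \<forall>\<eta>\<in>borel_measurable M. \<forall>x.
         sm (\<lambda>\<omega>. \<xi> \<omega> + \<eta> \<omega>) x = sm \<xi> x + sm \<eta> x) \<and>
     (\<forall>\<xi>\<in>borel_measurable M. \<forall>\<eta>\<in>borel_measurable M. \<forall>x.
         sm (\<lambda>\<omega>. \<xi> \<omega> * \<eta> \<omega>) x = sm \<xi> (sm \<eta> x)) \<and>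
     (\<forall>x. sm (\<lambda>\<omega>. 1) x = x) \<and>
     (\<forall>\<xi>\<in>borel_measurable M. \<forall>\<eta>\<in>borel_measurable M.
         (AE \<omega> in M. \<xi> \<omega> = \<eta> \<omega>) \<longrightarrow> sm \<xi> = sm \<eta>)"

definition is_L0_seminorm ::
  "'a measure \<Rightarrow> (('a \<Rightarrow> 'k::{real_normed_field,second_countable_topology}) \<Rightarrow> 'e::ab_group_add \<Rightarrow> 'e)
    \<Rightarrow> ('e \<Rightarrow> 'a \<Rightarrow> real) \<Rightarrow> bool" where
  "is_L0_seminorm M sm p \<longleftrightarrow>
     (\<forall>x. p x \<in> borel_measurable M \<and> (AE \<omega> in M. 0 \<le> p x \<omega>)) \<and>
     (\<forall>x y. AE \<omega> in M. p (x + y) \<omega> \<le> p x \<omega> + p y \<omega>) \<and>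
     (\<forall>\<xi>\<in>borel_measurable M. \<forall>x. AE \<omega> in M. p (sm \<xi> x) \<omega> = norm (\<xi> \<omega>) * p x \<omega>)"

text \<open>Random locally convex module (E, P): the whole type 'e is E.  The condition
  "the supremum of all seminorms of x is 0" is written as "every seminorm of x is 0 a.s."\<close>
definition random_lc_module ::
  "'a measure \<Rightarrow> (('a \<Rightarrow> 'k::{real_normed_field,second_countable_topology}) \<Rightarrow> 'e::ab_group_add \<Rightarrow> 'e)
    \<Rightarrow> ('e \<Rightarrow> 'a \<Rightarrow> real) set \<Rightarrow> bool" where
  "random_lc_module M sm \<P> \<longleftrightarrow> is_L0_module M sm \<and> (\<forall>p\<in>\<P>. is_L0_seminorm M sm p) \<and>
     (\<forall>x. (\<forall>p\<in>\<P>. AE \<omega> in M. p x \<omega> = 0) \<longrightarrow> x = 0)"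

definition normQ :: "('e \<Rightarrow> 'a \<Rightarrow> real) set \<Rightarrow> 'e \<Rightarrow> 'a \<Rightarrow> real" where
  "normQ Q x \<omega> = Max (insert 0 ((\<lambda>p. p x \<omega>) ` Q))"

definition eps_lambda_nbhd ::
  "'a measure \<Rightarrow> ('e \<Rightarrow> 'a \<Rightarrow> real) set \<Rightarrow> real \<Rightarrow> real \<Rightarrow> 'e set" where
  "eps_lambda_nbhd M Q \<epsilon> lam = {x. measure M {\<omega>\<in>space M. normQ Q x \<omega> < \<epsilon>} > 1 - lam}"

definition T_eps_lambda :: "'a measure \<Rightarrow> ('e::ab_group_add \<Rightarrow> 'a \<Rightarrow> real) set \<Rightarrow> 'e topology" where
  "T_eps_lambda M \<P> = topology (\<lambda>G. \<forall>x\<in>G. \<exists>Q \<epsilon> lam. finite Q \<and> Q \<subseteq> \<P> \<and> 0 < \<epsilon> \<and> 0 < lam \<and> lam < 1 \<and>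
       (\<lambda>y. x + y) ` eps_lambda_nbhd M Q \<epsilon> lam \<subseteq> G)"

text \<open>The locally L0-convex topology T_c on L0(F,K) (with P = {|.|}).\<close>
definition T_c_L0 :: "'a measure \<Rightarrow> ('a \<Rightarrow> 'k::{real_normed_field,second_countable_topology}) topology" where
  "T_c_L0 M = topology (\<lambda>G. G \<subseteq> borel_measurable M \<and>
     (\<forall>x\<in>G. \<exists>\<epsilon>\<in>borel_measurable M. (AE \<omega> in M. 0 < \<epsilon> \<omega>) \<and>
        {y \<in> borel_measurable M. AE \<omega> in M. norm (y \<omega> - x \<omega>) \<le> \<epsilon> \<omega>} \<subseteq> G))"

definition is_L0_hom ::
  "'a measure \<Rightarrow> (('a \<Rightarrow> 'k::{real_normed_field,second_countable_topology}) \<Rightarrow> 'e::ab_group_add \<Rightarrow> 'e)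
    \<Rightarrow> ('e \<Rightarrow> 'a \<Rightarrow> 'k) \<Rightarrow> bool" where
  "is_L0_hom M sm f \<longleftrightarrow> (\<forall>x. f x \<in> borel_measurable M) \<and>
     (\<forall>x y. AE \<omega> in M. f (x + y) \<omega> = f x \<omega> + f y \<omega>) \<and>
     (\<forall>\<xi>\<in>borel_measurable M. \<forall>x. AE \<omega> in M. f (sm \<xi> x) \<omega> = \<xi> \<omega> * f x \<omega>)"

end

theory Submission
  imports Defs
begin

lemma normQ_empty[simp]: "normQ {} x \<omega> = 0"
  by (simp add: normQ_def)

lemma normQ_insert: "finite Q \<Longrightarrow> normQ (insert p Q) x \<omega> = max (p x \<omega>) (normQ Q x \<omega>)"
proof -
  assume f: "finite Q"
  have "insert 0 ((\<lambda>p. p x \<omega>) ` insert p Q) = insert (p x \<omega>) (insert 0 ((\<lambda>p. p x \<omega>) ` Q))" by auto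
  then show ?thesis unfolding normQ_def using f by (simp add: Max_insert)
qed

lemma normQ_nonneg: "finite Q \<Longrightarrow> 0 \<le> normQ Q x \<omega>"
  unfolding normQ_def by (rule Max_ge) auto

lemma normQ_mono: "finite Q2 \<Longrightarrow> Q1 \<subseteq> Q2 \<Longrightarrow> normQ Q1 x \<omega> \<le> normQ Q2 x \<omega>"
  unfolding normQ_def by (rule Max_mono) auto

lemma normQ_meas: "finite Q \<Longrightarrow> (\<forall>p\<in>Q. p x \<in> borel_measurable M) \<Longrightarrow> normQ Q x \<in> borel_measurable M"
proof (induction Q rule: finite_induct)
  case empty
  then show ?case by (simp add: normQ_def[abs_def])
next
  case (insert p F)
  have "normQ (insert p F) x = (\<lambda>\<omega>. max (p x \<omega>) (normQ F x \<omega>))"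
    using insert by (simp add: normQ_insert fun_eq_iff)
  then show ?case using insert by (simp add: borel_measurable_max)
qed

lemma normQ_scale_pw: "finite Q \<Longrightarrow> 0 \<le> (c::real) \<Longrightarrow> (\<forall>p\<in>Q. p y \<omega> = c * p x \<omega>) \<Longrightarrow> normQ Q y \<omega> = c * normQ Q x \<omega>"
proof (induction Q rule: finite_induct)
  case empty
  then show ?case by simp
next
  case (insert p F)
  then show ?case by (simp add: normQ_insert max_mult_distrib_left)
qed


lemma pfin: "prob_space M \<Longrightarrow> finite_measure M"
  by (simp add: prob_space_def)

lemma null_of_measure0: "prob_space M \<Longrightarrow> A \<in> sets M \<Longrightarrow> measure M A = 0 \<Longrightarrow> A \<in> null_sets M"
  by (intro null_setsI) (simp_all add: finite_measure.emeasure_eq_measure pfin)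

lemma nbhd_mono:
  assumes M: "prob_space M" and meas: "\<forall>p\<in>P. \<forall>x. p x \<in> borel_measurable M"
    and "finite Q2" "Q1 \<subseteq> Q2" "Q2 \<subseteq> P" "e2 \<le> e1" "l2 \<le> l1"
  shows "eps_lambda_nbhd M Q2 e2 l2 \<subseteq> eps_lambda_nbhd M Q1 e1 l1"
proof
  fix y assume y: "y \<in> eps_lambda_nbhd M Q2 e2 l2"
  have fin1: "finite Q1" using assms finite_subset by blast
  have "normQ Q1 y \<in> borel_measurable M"
    using normQ_meas[OF fin1] meas assms by blast
  then have S: "{\<omega>\<in>space M. normQ Q1 y \<omega> < e1} \<in> sets M"
  proof -
    assume m: "normQ Q1 y \<in> borel_measurable M"
    have "{\<omega>\<in>space M. normQ Q1 y \<omega> < e1} = normQ Q1 y -` {..<e1} \<inter> space M" by auto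
    also have "\<dots> \<in> sets M" by (rule measurable_sets[OF m]) auto
    finally show ?thesis .
  qed
  have sub: "{\<omega>\<in>space M. normQ Q2 y \<omega> < e2} \<subseteq> {\<omega>\<in>space M. normQ Q1 y \<omega> < e1}"
    using normQ_mono[OF assms(3,4), of y] assms(6) by (smt (verit) Collect_mono_iff)
  have "measure M {\<omega>\<in>space M. normQ Q2 y \<omega> < e2} \<le> measure M {\<omega>\<in>space M. normQ Q1 y \<omega> < e1}"
    by (rule finite_measure.finite_measure_mono[OF pfin[OF M] sub S])
  then show "y \<in> eps_lambda_nbhd M Q1 e1 l1"
    using y assms(7) unfolding eps_lambda_nbhd_def by auto
qed

lemma istop_Te:
  assumes M: "prob_space M" and meas: "\<forall>p\<in>P. \<forall>x. p x \<in> borel_measurable M"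
  shows "istopology (\<lambda>G. \<forall>x\<in>G. \<exists>Q \<epsilon> lam. finite Q \<and> Q \<subseteq> P \<and> 0 < \<epsilon> \<and> 0 < lam \<and> lam < 1 \<and>
       (\<lambda>y. x + y) ` eps_lambda_nbhd M Q \<epsilon> lam \<subseteq> G)"
  unfolding istopology_def
proof (intro conjI allI impI)
  fix S T :: "'b set"
  assume S: "\<forall>x\<in>S. \<exists>Q \<epsilon> lam. finite Q \<and> Q \<subseteq> P \<and> 0 < \<epsilon> \<and> 0 < lam \<and> lam < 1 \<and>
       (\<lambda>y. x + y) ` eps_lambda_nbhd M Q \<epsilon> lam \<subseteq> S"
    and T: "\<forall>x\<in>T. \<exists>Q \<epsilon> lam. finite Q \<and> Q \<subseteq> P \<and> 0 < \<epsilon> \<and> 0 < lam \<and> lam < 1 \<and>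
       (\<lambda>y. x + y) ` eps_lambda_nbhd M Q \<epsilon> lam \<subseteq> T"
  show "\<forall>x\<in>S \<inter> T. \<exists>Q \<epsilon> lam. finite Q \<and> Q \<subseteq> P \<and> 0 < \<epsilon> \<and> 0 < lam \<and> lam < 1 \<and>
       (\<lambda>y. x + y) ` eps_lambda_nbhd M Q \<epsilon> lam \<subseteq> S \<inter> T"
  proof
    fix x assume x: "x \<in> S \<inter> T"
    obtain Q1 e1 l1 where 1: "finite Q1 \<and> Q1 \<subseteq> P \<and> 0 < e1 \<and> 0 < l1 \<and> l1 < 1 \<and>
       (\<lambda>y. x + y) ` eps_lambda_nbhd M Q1 e1 l1 \<subseteq> S"
      using bspec[OF S, of x] x by blast
    obtain Q2 e2 l2 where 2: "finite Q2 \<and> Q2 \<subseteq> P \<and> 0 < e2 \<and> 0 < l2 \<and> l2 < 1 \<and>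
       (\<lambda>y. x + y) ` eps_lambda_nbhd M Q2 e2 l2 \<subseteq> T"
      using bspec[OF T, of x] x by blast
    have f1: "finite Q1" "Q1 \<subseteq> P" "0 < e1" "0 < l1" "l1 < 1" "(\<lambda>y. x + y) ` eps_lambda_nbhd M Q1 e1 l1 \<subseteq> S"
      using 1 by blast+
    have f2: "finite Q2" "Q2 \<subseteq> P" "0 < e2" "0 < l2" "l2 < 1" "(\<lambda>y. x + y) ` eps_lambda_nbhd M Q2 e2 l2 \<subseteq> T"
      using 2 by blast+
    have fu: "finite (Q1 \<union> Q2)" "Q1 \<union> Q2 \<subseteq> P" using f1 f2 by auto
    have a: "eps_lambda_nbhd M (Q1 \<union> Q2) (min e1 e2) (min l1 l2) \<subseteq> eps_lambda_nbhd M Q1 e1 l1"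
      by (rule nbhd_mono[OF M meas fu(1) Un_upper1 fu(2) min.cobounded1 min.cobounded1])
    have b: "eps_lambda_nbhd M (Q1 \<union> Q2) (min e1 e2) (min l1 l2) \<subseteq> eps_lambda_nbhd M Q2 e2 l2"
      by (rule nbhd_mono[OF M meas fu(1) Un_upper2 fu(2) min.cobounded2 min.cobounded2])
    have c: "(\<lambda>y. x + y) ` eps_lambda_nbhd M (Q1 \<union> Q2) (min e1 e2) (min l1 l2) \<subseteq> S \<inter> T"
      by (rule Int_greatest[OF order_trans[OF image_mono[OF a] f1(6)] order_trans[OF image_mono[OF b] f2(6)]])
    have d: "0 < min e1 e2" "0 < min l1 l2" "min l1 l2 < 1" using f1 f2 by auto
    show "\<exists>Q \<epsilon> lam. finite Q \<and> Q \<subseteq> P \<and> 0 < \<epsilon> \<and> 0 < lam \<and> lam < 1 \<and>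
       (\<lambda>y. x + y) ` eps_lambda_nbhd M Q \<epsilon> lam \<subseteq> S \<inter> T"
      using fu c d by blast
  qed
next
  fix K :: "'b set set"
  assume K: "\<forall>G\<in>K. \<forall>x\<in>G. \<exists>Q \<epsilon> lam. finite Q \<and> Q \<subseteq> P \<and> 0 < \<epsilon> \<and> 0 < lam \<and> lam < 1 \<and>
       (\<lambda>y. x + y) ` eps_lambda_nbhd M Q \<epsilon> lam \<subseteq> G"
  show "\<forall>x\<in>\<Union>K. \<exists>Q \<epsilon> lam. finite Q \<and> Q \<subseteq> P \<and> 0 < \<epsilon> \<and> 0 < lam \<and> lam < 1 \<and>
       (\<lambda>y. x + y) ` eps_lambda_nbhd M Q \<epsilon> lam \<subseteq> \<Union>K"
  proof
    fix x assume "x \<in> \<Union>K"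
    then obtain G where G: "G \<in> K" "x \<in> G" by blast
    have "\<exists>Q \<epsilon> lam. finite Q \<and> Q \<subseteq> P \<and> 0 < \<epsilon> \<and> 0 < lam \<and> lam < 1 \<and>
       (\<lambda>y. x + y) ` eps_lambda_nbhd M Q \<epsilon> lam \<subseteq> G"
      using bspec[OF bspec[OF K G(1)] G(2)] .
    then obtain Q \<epsilon> lam where q: "finite Q \<and> Q \<subseteq> P \<and> 0 < \<epsilon> \<and> 0 < lam \<and> lam < 1"
      and g: "(\<lambda>y. x + y) ` eps_lambda_nbhd M Q \<epsilon> lam \<subseteq> G" by blast
    have "G \<subseteq> \<Union>K" using G(1) by (rule Union_upper)
    then have "(\<lambda>y. x + y) ` eps_lambda_nbhd M Q \<epsilon> lam \<subseteq> \<Union>K" using g by (rule order_trans[rotated])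
    then show "\<exists>Q \<epsilon> lam. finite Q \<and> Q \<subseteq> P \<and> 0 < \<epsilon> \<and> 0 < lam \<and> lam < 1 \<and>
       (\<lambda>y. x + y) ` eps_lambda_nbhd M Q \<epsilon> lam \<subseteq> \<Union>K" using q by blast
  qed
qed

lemma openin_Te:
  assumes "prob_space M" "\<forall>p\<in>P. \<forall>x. p x \<in> borel_measurable M"
  shows "openin (T_eps_lambda M P) G \<longleftrightarrow> (\<forall>x\<in>G. \<exists>Q \<epsilon> lam. finite Q \<and> Q \<subseteq> P \<and> 0 < \<epsilon> \<and> 0 < lam \<and> lam < 1 \<and>
       (\<lambda>y. x + y) ` eps_lambda_nbhd M Q \<epsilon> lam \<subseteq> G)"
  unfolding T_eps_lambda_def by (subst topology_inverse'[OF istop_Te[OF assms]]) (rule refl)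

lemma topspace_Te:
  assumes "prob_space M" "\<forall>p\<in>P. \<forall>x. p x \<in> borel_measurable M"
  shows "topspace (T_eps_lambda M P) = UNIV"
proof -
  have "openin (T_eps_lambda M P) UNIV"
    unfolding openin_Te[OF assms] by (intro ballI exI[of _ "{}"] exI[of _ 1] exI[of _ "1/2"]) auto
  then show ?thesis using openin_subset by auto
qed

lemma istop_Tc:
  "istopology (\<lambda>G::('a \<Rightarrow> 'k::{real_normed_field,second_countable_topology}) set. G \<subseteq> borel_measurable M \<and>
     (\<forall>x\<in>G. \<exists>\<epsilon>\<in>borel_measurable M. (AE \<omega> in M. 0 < \<epsilon> \<omega>) \<and>
        {y \<in> borel_measurable M. AE \<omega> in M. norm (y \<omega> - x \<omega>) \<le> \<epsilon> \<omega>} \<subseteq> G))"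
  unfolding istopology_def
proof (intro conjI allI impI)
  fix S T :: "('a \<Rightarrow> 'k::{real_normed_field,second_countable_topology}) set"
  assume S: "S \<subseteq> borel_measurable M \<and>
     (\<forall>x\<in>S. \<exists>\<epsilon>\<in>borel_measurable M. (AE \<omega> in M. 0 < \<epsilon> \<omega>) \<and>
        {y \<in> borel_measurable M. AE \<omega> in M. norm (y \<omega> - x \<omega>) \<le> \<epsilon> \<omega>} \<subseteq> S)"
    and T: "T \<subseteq> borel_measurable M \<and>
     (\<forall>x\<in>T. \<exists>\<epsilon>\<in>borel_measurable M. (AE \<omega> in M. 0 < \<epsilon> \<omega>) \<and>
        {y \<in> borel_measurable M. AE \<omega> in M. norm (y \<omega> - x \<omega>) \<le> \<epsilon> \<omega>} \<subseteq> T)"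
  show "S \<inter> T \<subseteq> borel_measurable M" using S by auto
next
  fix S T :: "('a \<Rightarrow> 'k::{real_normed_field,second_countable_topology}) set"
  assume S: "S \<subseteq> borel_measurable M \<and>
     (\<forall>x\<in>S. \<exists>\<epsilon>\<in>borel_measurable M. (AE \<omega> in M. 0 < \<epsilon> \<omega>) \<and>
        {y \<in> borel_measurable M. AE \<omega> in M. norm (y \<omega> - x \<omega>) \<le> \<epsilon> \<omega>} \<subseteq> S)"
    and T: "T \<subseteq> borel_measurable M \<and>
     (\<forall>x\<in>T. \<exists>\<epsilon>\<in>borel_measurable M. (AE \<omega> in M. 0 < \<epsilon> \<omega>) \<and>
        {y \<in> borel_measurable M. AE \<omega> in M. norm (y \<omega> - x \<omega>) \<le> \<epsilon> \<omega>} \<subseteq> T)"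
  show "\<forall>x\<in>S \<inter> T. \<exists>\<epsilon>\<in>borel_measurable M. (AE \<omega> in M. 0 < \<epsilon> \<omega>) \<and>
        {y \<in> borel_measurable M. AE \<omega> in M. norm (y \<omega> - x \<omega>) \<le> \<epsilon> \<omega>} \<subseteq> S \<inter> T"
  proof
    fix x assume "x \<in> S \<inter> T"
    then obtain e1 e2 where e1: "e1 \<in> borel_measurable M" "AE \<omega> in M. 0 < e1 \<omega>"
       "{y \<in> borel_measurable M. AE \<omega> in M. norm (y \<omega> - x \<omega>) \<le> e1 \<omega>} \<subseteq> S"
      and e2: "e2 \<in> borel_measurable M" "AE \<omega> in M. 0 < e2 \<omega>"
       "{y \<in> borel_measurable M. AE \<omega> in M. norm (y \<omega> - x \<omega>) \<le> e2 \<omega>} \<subseteq> T"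
      using S T by blast
    show "\<exists>\<epsilon>\<in>borel_measurable M. (AE \<omega> in M. 0 < \<epsilon> \<omega>) \<and>
        {y \<in> borel_measurable M. AE \<omega> in M. norm (y \<omega> - x \<omega>) \<le> \<epsilon> \<omega>} \<subseteq> S \<inter> T"
    proof -
      have m: "(\<lambda>\<omega>. min (e1 \<omega>) (e2 \<omega>)) \<in> borel_measurable M" using e1(1) e2(1) by (simp add: borel_measurable_min)
      have p: "AE \<omega> in M. 0 < min (e1 \<omega>) (e2 \<omega>)" using e1(2) e2(2) by eventually_elim auto
      have sub: "{y \<in> borel_measurable M. AE \<omega> in M. norm (y \<omega> - x \<omega>) \<le> min (e1 \<omega>) (e2 \<omega>)} \<subseteq> S \<inter> T"
      proof
        fix y assume y: "y \<in> {y \<in> borel_measurable M. AE \<omega> in M. norm (y \<omega> - x \<omega>) \<le> min (e1 \<omega>) (e2 \<omega>)}"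
        have yb: "y \<in> borel_measurable M" and yae: "AE \<omega> in M. norm (y \<omega> - x \<omega>) \<le> min (e1 \<omega>) (e2 \<omega>)" using y by auto
        have "AE \<omega> in M. norm (y \<omega> - x \<omega>) \<le> e1 \<omega>" using yae by eventually_elim simp
        moreover have "AE \<omega> in M. norm (y \<omega> - x \<omega>) \<le> e2 \<omega>" using yae by eventually_elim simp
        moreover note yb
        ultimately show "y \<in> S \<inter> T" using e1(3) e2(3) by blast
      qed
      show ?thesis by (rule bexI[OF _ m]) (use p sub in simp)
    qed
  qed
next
  fix K :: "('a \<Rightarrow> 'k) set set"
  assume K: "\<forall>G\<in>K. G \<subseteq> borel_measurable M \<and>
     (\<forall>x\<in>G. \<exists>\<epsilon>\<in>borel_measurable M. (AE \<omega> in M. 0 < \<epsilon> \<omega>) \<and>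
        {y \<in> borel_measurable M. AE \<omega> in M. norm (y \<omega> - x \<omega>) \<le> \<epsilon> \<omega>} \<subseteq> G)"
  show "\<Union>K \<subseteq> borel_measurable M" using K by (intro Union_least) blast
next
  fix K :: "('a \<Rightarrow> 'k) set set"
  assume K: "\<forall>G\<in>K. G \<subseteq> borel_measurable M \<and>
     (\<forall>x\<in>G. \<exists>\<epsilon>\<in>borel_measurable M. (AE \<omega> in M. 0 < \<epsilon> \<omega>) \<and>
        {y \<in> borel_measurable M. AE \<omega> in M. norm (y \<omega> - x \<omega>) \<le> \<epsilon> \<omega>} \<subseteq> G)"
  show "\<forall>x\<in>\<Union>K. \<exists>\<epsilon>\<in>borel_measurable M. (AE \<omega> in M. 0 < \<epsilon> \<omega>) \<and>
        {y \<in> borel_measurable M. AE \<omega> in M. norm (y \<omega> - x \<omega>) \<le> \<epsilon> \<omega>} \<subseteq> \<Union>K"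
  proof
    fix x assume "x \<in> \<Union>K"
    then obtain G where G: "G \<in> K" "x \<in> G" by blast
    have "\<exists>\<epsilon>\<in>borel_measurable M. (AE \<omega> in M. 0 < \<epsilon> \<omega>) \<and>
        {y \<in> borel_measurable M. AE \<omega> in M. norm (y \<omega> - x \<omega>) \<le> \<epsilon> \<omega>} \<subseteq> G"
      using K G by blast
    then obtain e where e: "e \<in> borel_measurable M" "AE \<omega> in M. 0 < e \<omega>"
        "{y \<in> borel_measurable M. AE \<omega> in M. norm (y \<omega> - x \<omega>) \<le> e \<omega>} \<subseteq> G" by blast
    have "G \<subseteq> \<Union>K" using G(1) by (rule Union_upper)
    then show "\<exists>\<epsilon>\<in>borel_measurable M. (AE \<omega> in M. 0 < \<epsilon> \<omega>) \<and>
        {y \<in> borel_measurable M. AE \<omega> in M. norm (y \<omega> - x \<omega>) \<le> \<epsilon> \<omega>} \<subseteq> \<Union>K"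
      using e by blast
  qed
qed

lemma openin_Tc:
  "openin (T_c_L0 M) G \<longleftrightarrow> G \<subseteq> borel_measurable M \<and>
     (\<forall>x\<in>G. \<exists>\<epsilon>\<in>borel_measurable M. (AE \<omega> in M. 0 < \<epsilon> \<omega>) \<and>
        {y \<in> borel_measurable M. AE \<omega> in M. norm (y \<omega> - x \<omega>) \<le> \<epsilon> \<omega>} \<subseteq> G)"
  unfolding T_c_L0_def by (subst topology_inverse'[OF istop_Tc]) (rule refl)

lemma topspace_Tc: "topspace (T_c_L0 M) = borel_measurable M"
proof -
  have "openin (T_c_L0 M) (borel_measurable M)"
    unfolding openin_Tc by (intro conjI ballI bexI[of _ "\<lambda>_. 1"]) auto
  moreover have "\<And>G. openin (T_c_L0 M) G \<Longrightarrow> G \<subseteq> borel_measurable M" unfolding openin_Tc by blast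
  ultimately show ?thesis unfolding topspace_def by blast
qed

lemma atom_bound:
  assumes M: "prob_space M" and A: "P_atom M A" and g: "g \<in> borel_measurable M"
  shows "\<exists>c::real. AE \<omega> in M. \<omega> \<in> A \<longrightarrow> g \<omega> \<le> c"
proof -
  interpret prob_space M by (rule M)
  have As: "A \<in> sets M" and Ap: "measure M A > 0"
    and Aat: "\<forall>B\<in>sets M. B \<subseteq> A \<longrightarrow> measure M B = 0 \<or> measure M (A - B) = 0"
    using A unfolding P_atom_def by auto
  define B where "B m = A \<inter> {\<omega>\<in>space M. g \<omega> \<le> real m}" for m :: nat
  have Bs: "B m \<in> sets M" for m
  proof -
    have "{\<omega>\<in>space M. g \<omega> \<le> real m} \<in> sets M" using g by measurable
    then show ?thesis unfolding B_def using As by auto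
  qed
  have inc: "incseq B" unfolding incseq_def B_def by (auto intro: order_trans)
  have un: "(\<Union>m. B m) = A"
  proof
    show "(\<Union>m. B m) \<subseteq> A" unfolding B_def by auto
    show "A \<subseteq> (\<Union>m. B m)"
    proof
      fix \<omega> assume w: "\<omega> \<in> A"
      then have "\<omega> \<in> space M" using sets.sets_into_space[OF As] by auto
      moreover have "g \<omega> \<le> real (nat \<lceil>g \<omega>\<rceil>)" by (rule real_nat_ceiling_ge)
      ultimately show "\<omega> \<in> (\<Union>m. B m)" using w unfolding B_def by blast
    qed
  qed
  have "(\<lambda>m. measure M (B m)) \<longlonglongrightarrow> measure M A"
    using finite_Lim_measure_incseq[of B] Bs inc un by auto
  from order_tendstoD(1)[OF this Ap] obtain m where m: "measure M (B m) > 0"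
    by (auto simp: eventually_sequentially)
  have "B m \<subseteq> A" unfolding B_def by auto
  then have "measure M (A - B m) = 0" using Aat Bs m by auto
  then have N: "A - B m \<in> null_sets M" using As Bs
    by (intro null_setsI) (auto simp: emeasure_eq_measure)
  show ?thesis
  proof (intro exI[of _ "real m"] AE_I'[OF N])
    show "{x \<in> space M. \<not> (x \<in> A \<longrightarrow> g x \<le> real m)} \<subseteq> A - B m" unfolding B_def by auto
  qed
qed

lemma atom_in:
  assumes M: "prob_space M" and A: "P_atom M A" and S: "S \<in> sets M"
    and big: "measure M S > 1 - measure M A"
  shows "AE \<omega> in M. \<omega> \<in> A \<longrightarrow> \<omega> \<in> S"
proof -
  interpret prob_space M by (rule M)
  have As: "A \<in> sets M" and Ap: "measure M A > 0"
    and Aat: "\<forall>B\<in>sets M. B \<subseteq> A \<longrightarrow> measure M B = 0 \<or> measure M (A - B) = 0"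
    using A unfolding P_atom_def by auto
  have ABs: "A \<inter> S \<in> sets M" using As S by auto
  have "measure M (A \<inter> S) = 0 \<or> measure M (A - A \<inter> S) = 0" using Aat ABs by auto
  moreover have "measure M (A \<inter> S) \<noteq> 0"
  proof
    assume z: "measure M (A \<inter> S) = 0"
    have "measure M (A - A \<inter> S) = measure M A - measure M (A \<inter> S)"
      by (rule finite_measure_Diff[OF As ABs]) auto
    then have e: "measure M (A - S) = measure M A" using z by (simp add: Diff_Int)
    have "A - S \<subseteq> space M - S" using sets.sets_into_space[OF As] by auto
    then have "measure M (A - S) \<le> measure M (space M - S)" by (intro finite_measure_mono) (use S in auto)
    also have "\<dots> = 1 - measure M S" using S by (simp add: prob_compl)
    finally show False using e big by linarith
  qed
  ultimately have "measure M (A - A \<inter> S) = 0" by auto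
  then have N: "A - A \<inter> S \<in> null_sets M" using As ABs
    by (intro null_setsI) (auto simp: emeasure_eq_measure)
  show ?thesis by (rule AE_I'[OF N]) auto
qed

lemma pw_bound:
  fixes n :: nat and e C D \<delta> :: real
  assumes H: "\<forall>i<n. \<omega> \<in> A i \<longrightarrow> (nq i \<le> \<delta> \<and> 0 \<le> nq i \<and> 0 \<le> \<xi> i \<and> \<xi> i \<le> C \<and> 1 / e \<le> D)"
    and e: "0 < e" and C: "0 < C" and D: "0 < D" and d: "\<delta> = 1 / (real (n+1) * C * D)"
  shows "(\<Sum>i<n. indicator (A i) \<omega> * \<xi> i * nq i) \<le> e"
proof (cases "\<exists>j<n. \<omega> \<in> A j")
  case True
  then obtain j where j: "j < n" "\<omega> \<in> A j" by blast
  have eD: "1 / D \<le> e" using H j e D by (auto simp: field_simps)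
  have dpos: "0 < \<delta>" using d C D by simp
  have trm: "indicator (A i) \<omega> * \<xi> i * nq i \<le> C * \<delta>" if "i < n" for i
  proof (cases "\<omega> \<in> A i")
    case True
    then have "\<xi> i * nq i \<le> C * \<delta>" using H that by (intro mult_mono) auto
    then show ?thesis using True by simp
  next
    case False
    then show ?thesis using C dpos by simp
  qed
  have "(\<Sum>i<n. indicator (A i) \<omega> * \<xi> i * nq i) \<le> (\<Sum>i<n. C * \<delta>)"
    by (rule sum_mono) (use trm in auto)
  also have "\<dots> = real n * C * \<delta>" by simp
  also have "\<dots> = real n / (real (n+1) * D)" unfolding d using C D by (simp add: divide_simps)
  also have "\<dots> \<le> 1 / D"
  proof -
    have "real n / (real (n+1) * D) \<le> real (n+1) / (real (n+1) * D)" using D by (intro divide_right_mono) auto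
    also have "\<dots> = 1 / D" by simp
    finally show ?thesis .
  qed
  finally show ?thesis using eD by linarith
next
  case False
  then have "(\<Sum>i<n. indicator (A i) \<omega> * \<xi> i * nq i) = 0" by (intro sum.neutral) auto
  then show ?thesis using e by simp
qed

lemma zero_of_small:
  fixes a :: real
  assumes "\<forall>m::nat. real m * a < 1" "0 \<le> a"
  shows "a = 0"
proof (rule ccontr)
  assume "a \<noteq> 0"
  then have a: "0 < a" using assms(2) by simp
  have "1 / a \<le> real (nat \<lceil>1 / a\<rceil>)" by (rule real_nat_ceiling_ge)
  then have "1 \<le> real (nat \<lceil>1 / a\<rceil>) * a" using a by (simp only: pos_divide_le_eq)
  then show False using assms(1) by (metis not_less)
qed

lemma pw2:
  fixes a q \<epsilon> :: real and N :: nat and A :: "nat \<Rightarrow> 'a set"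
  assumes H: "\<forall>m::nat. \<bar>(if inU then (if 0 < q then \<epsilon> / (2 * q) else real m) else real m)\<bar> * a < 1"
    and a: "0 \<le> a" and q: "0 \<le> q" and e: "0 < \<epsilon>"
    and U: "inU \<longleftrightarrow> (\<exists>j<N. \<omega> \<in> A j)"
  shows "a \<le> (\<Sum>i<N. indicator (A i) \<omega> * (2 / \<epsilon>) * q)"
proof -
  have nn: "0 \<le> (\<Sum>i<N. indicator (A i) \<omega> * (2 / \<epsilon>) * q)"
    using q e by (intro sum_nonneg) auto
  show ?thesis
  proof (cases "inU \<and> 0 < q")
    case True
    then obtain j where j: "j < N" "\<omega> \<in> A j" using U by blast
    have "\<bar>\<epsilon> / (2 * q)\<bar> * a < 1" using H True by auto
    then have "\<epsilon> * a < 2 * q" using True e by (simp add: field_simps abs_of_pos)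
    then have "a \<le> (2 / \<epsilon>) * q" using e by (simp add: field_simps)
    also have "\<dots> = indicator (A j) \<omega> * (2 / \<epsilon>) * q" using j by simp
    also have "\<dots> \<le> (\<Sum>i<N. indicator (A i) \<omega> * (2 / \<epsilon>) * q)"
      using j q e by (intro member_le_sum) auto
    finally show ?thesis .
  next
    case False
    have "\<forall>m::nat. real m * a < 1"
    proof
      fix m :: nat
      have "\<bar>(if inU then (if 0 < q then \<epsilon> / (2 * q) else real m) else real m)\<bar> * a < 1" using H by blast
      then show "real m * a < 1" using False by (cases inU) auto
    qed
    then have "a = 0" using zero_of_small a by blast
    then show ?thesis using nn by simp
  qed
qed

lemma rlc_meas:
  assumes "random_lc_module M sm P"
  shows "\<forall>p\<in>P. \<forall>x. p x \<in> borel_measurable M"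
  using assms unfolding random_lc_module_def is_L0_seminorm_def by blast

lemma normQ_meas':
  assumes "random_lc_module M sm P" "finite Q" "Q \<subseteq> P"
  shows "normQ Q x \<in> borel_measurable M"
  using normQ_meas[OF assms(2)] rlc_meas[OF assms(1)] assms(3) by blast

lemma normQ_sm:
  assumes rlc: "random_lc_module M sm P" and Q: "finite Q" "Q \<subseteq> P" and t: "t \<in> borel_measurable M"
  shows "AE \<omega> in M. normQ Q (sm t x) \<omega> = norm (t \<omega>) * normQ Q x \<omega>"
proof -
  have "\<forall>p\<in>Q. AE \<omega> in M. p (sm t x) \<omega> = norm (t \<omega>) * p x \<omega>"
    using rlc Q t unfolding random_lc_module_def is_L0_seminorm_def by blast
  then have "AE \<omega> in M. \<forall>p\<in>Q. p (sm t x) \<omega> = norm (t \<omega>) * p x \<omega>"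
    by (rule eventually_ball_finite[OF Q(1)])
  then show ?thesis
    by eventually_elim (rule normQ_scale_pw[OF Q(1)], auto)
qed

lemma f_zero:
  assumes "is_L0_hom M sm f"
  shows "AE \<omega> in M. f 0 \<omega> = 0"
proof -
  have "AE \<omega> in M. f (0 + 0) \<omega> = f 0 \<omega> + f 0 \<omega>" using assms unfolding is_L0_hom_def by blast
  then show ?thesis by eventually_elim simp
qed

lemma f_diff:
  assumes "is_L0_hom M sm f"
  shows "AE \<omega> in M. f (x + y) \<omega> - f x \<omega> = f y \<omega>"
proof -
  have "AE \<omega> in M. f (x + y) \<omega> = f x \<omega> + f y \<omega>" using assms unfolding is_L0_hom_def by blast
  then show ?thesis by eventually_elim simp
qed

lemma dir_bound_to_cont:
  fixes M :: "'a measure"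
    and sm :: "('a \<Rightarrow> 'k::{real_normed_field,second_countable_topology}) \<Rightarrow> 'e::ab_group_add \<Rightarrow> 'e"
    and P :: "('e \<Rightarrow> 'a \<Rightarrow> real) set"
    and f :: "'e \<Rightarrow> 'a \<Rightarrow> 'k"
    and A :: "nat \<Rightarrow> 'a set" and \<xi> :: "nat \<Rightarrow> 'a \<Rightarrow> real" and Q :: "nat \<Rightarrow> ('e \<Rightarrow> 'a \<Rightarrow> real) set"
  assumes M: "prob_space M" and rlc: "random_lc_module M sm P" and hom: "is_L0_hom M sm f"
    and H: "\<forall>i<n. P_atom M (A i) \<and> \<xi> i \<in> borel_measurable M \<and> (AE \<omega> in M. 0 \<le> \<xi> i \<omega>) \<and>
              finite (Q i) \<and> Q i \<subseteq> P"
    and B: "\<forall>x. AE \<omega> in M. norm (f x \<omega>) \<le> (\<Sum>i<n. indicator (A i) \<omega> * \<xi> i \<omega> * normQ (Q i) x \<omega>)"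
  shows "continuous_map (T_eps_lambda M P) (T_c_L0 M) f"
proof -
  interpret prob_space M by (rule M)
  have meas: "\<forall>p\<in>P. \<forall>x. p x \<in> borel_measurable M" by (rule rlc_meas[OF rlc])
  have fm: "\<And>x. f x \<in> borel_measurable M" using hom unfolding is_L0_hom_def by blast
  show ?thesis
    unfolding continuous_map_def topspace_Te[OF M meas] topspace_Tc
  proof (intro conjI allI impI)
    show "f \<in> UNIV \<rightarrow> borel_measurable M" using fm by blast
    fix U :: "('a \<Rightarrow> 'k) set" assume U: "openin (T_c_L0 M) U"
    show "openin (T_eps_lambda M P) {x \<in> UNIV. f x \<in> U}"
      unfolding openin_Te[OF M meas]
    proof
      fix x assume "x \<in> {x \<in> UNIV. f x \<in> U}"
      then have fxU: "f x \<in> U" by simp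
      obtain e where e: "e \<in> borel_measurable M" "AE \<omega> in M. 0 < e \<omega>"
        "{y \<in> borel_measurable M. AE \<omega> in M. norm (y \<omega> - f x \<omega>) \<le> e \<omega>} \<subseteq> U"
        using U fxU unfolding openin_Tc by blast
      have "\<forall>i<n. \<exists>c. AE \<omega> in M. \<omega> \<in> A i \<longrightarrow> \<xi> i \<omega> \<le> c"
        using H atom_bound[OF M] by blast
      then obtain c where c: "\<forall>i<n. AE \<omega> in M. \<omega> \<in> A i \<longrightarrow> \<xi> i \<omega> \<le> c i" by metis
      have ie: "(\<lambda>\<omega>. 1 / e \<omega>) \<in> borel_measurable M" using e(1) by measurable
      have "\<forall>i<n. \<exists>d. AE \<omega> in M. \<omega> \<in> A i \<longrightarrow> 1 / e \<omega> \<le> d"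
        using H atom_bound[OF M _ ie] by blast
      then obtain d where d: "\<forall>i<n. AE \<omega> in M. \<omega> \<in> A i \<longrightarrow> 1 / e \<omega> \<le> d i" by metis
      define C where "C = 1 + (\<Sum>i<n. \<bar>c i\<bar>)"
      define D where "D = 1 + (\<Sum>i<n. \<bar>d i\<bar>)"
      have Cpos: "0 < C" unfolding C_def by (simp add: add_pos_nonneg sum_nonneg)
      have Dpos: "0 < D" unfolding D_def by (simp add: add_pos_nonneg sum_nonneg)
      have cC: "c i \<le> C" if "i < n" for i
      proof -
        have "\<bar>c i\<bar> \<le> (\<Sum>i<n. \<bar>c i\<bar>)" using that by (intro member_le_sum) auto
        then show ?thesis unfolding C_def by linarith
      qed
      have dD: "d i \<le> D" if "i < n" for i
      proof -
        have "\<bar>d i\<bar> \<le> (\<Sum>i<n. \<bar>d i\<bar>)" using that by (intro member_le_sum) auto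
        then show ?thesis unfolding D_def by linarith
      qed
      define \<delta> where "\<delta> = 1 / (real (n+1) * C * D)"
      have dpos: "0 < \<delta>" unfolding \<delta>_def using Cpos Dpos by simp
      define lam where "lam = Min (insert (1/2) ((\<lambda>i. measure M (A i)) ` {..<n}))"
      have Apos: "\<forall>i<n. 0 < measure M (A i)" using H unfolding P_atom_def by blast
      have lpos: "0 < lam" unfolding lam_def using Apos by (subst Min_gr_iff) auto
      have "lam \<le> 1/2" unfolding lam_def by (rule Min_le) auto
      then have l1: "lam < 1" by simp
      have lA: "lam \<le> measure M (A i)" if "i < n" for i unfolding lam_def using that by (intro Min_le) auto
      define Q' where "Q' = (\<Union>i<n. Q i)"
      have Q'f: "finite Q'" unfolding Q'_def using H by auto
      have Q'P: "Q' \<subseteq> P" unfolding Q'_def using H by auto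
      have QQ': "Q i \<subseteq> Q'" if "i < n" for i unfolding Q'_def using that by auto
      have sub: "(\<lambda>y. x + y) ` eps_lambda_nbhd M Q' \<delta> lam \<subseteq> {x \<in> UNIV. f x \<in> U}"
      proof
        fix z assume "z \<in> (\<lambda>y. x + y) ` eps_lambda_nbhd M Q' \<delta> lam"
        then obtain y where z: "z = x + y" and y: "y \<in> eps_lambda_nbhd M Q' \<delta> lam" by blast
        define S where "S = {\<omega>\<in>space M. normQ Q' y \<omega> < \<delta>}"
        have nqm: "normQ Q' y \<in> borel_measurable M" by (rule normQ_meas'[OF rlc Q'f Q'P])
        have Ss: "S \<in> sets M" unfolding S_def using nqm by measurable
        have Sbig: "measure M S > 1 - lam" using y unfolding eps_lambda_nbhd_def S_def by simp
        have inS: "\<forall>i<n. AE \<omega> in M. \<omega> \<in> A i \<longrightarrow> \<omega> \<in> S"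
        proof (intro allI impI)
          fix i assume i: "i < n"
          show "AE \<omega> in M. \<omega> \<in> A i \<longrightarrow> \<omega> \<in> S"
            by (rule atom_in[OF M _ Ss]) (use H i lA[OF i] Sbig in auto)
        qed
        have xinn: "\<forall>i<n. AE \<omega> in M. 0 \<le> \<xi> i \<omega>" using H by blast
        have all: "AE \<omega> in M. \<forall>i\<in>{..<n}. (\<omega> \<in> A i \<longrightarrow> \<omega> \<in> S) \<and> (\<omega> \<in> A i \<longrightarrow> \<xi> i \<omega> \<le> c i)
             \<and> (\<omega> \<in> A i \<longrightarrow> 1 / e \<omega> \<le> d i) \<and> 0 \<le> \<xi> i \<omega>"
          by (rule eventually_ball_finite) (use inS c d xinn in \<open>auto intro: eventually_conj\<close>)
        have "AE \<omega> in M. norm (f z \<omega> - f x \<omega>) \<le> e \<omega>"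
          using all B[rule_format, of y] f_diff[OF hom, of x y] e(2)
        proof eventually_elim
          case (elim \<omega>)
          have H2: "\<forall>i<n. \<omega> \<in> A i \<longrightarrow> (normQ (Q i) y \<omega> \<le> \<delta> \<and> 0 \<le> normQ (Q i) y \<omega> \<and> 0 \<le> \<xi> i \<omega> \<and> \<xi> i \<omega> \<le> C \<and> 1 / e \<omega> \<le> D)"
          proof (intro allI impI conjI)
            fix i assume i: "i < n" and w: "\<omega> \<in> A i"
            have "normQ (Q i) y \<omega> \<le> normQ Q' y \<omega>" by (rule normQ_mono[OF Q'f QQ'[OF i]])
            also have "\<dots> < \<delta>" using elim(1) i w unfolding S_def by auto
            finally show "normQ (Q i) y \<omega> \<le> \<delta>" by simp
            show "0 \<le> normQ (Q i) y \<omega>" using H i by (intro normQ_nonneg) auto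
            show "0 \<le> \<xi> i \<omega>" using elim(1) i by auto
            show "\<xi> i \<omega> \<le> C" using elim(1) i w cC[OF i] by auto
            show "1 / e \<omega> \<le> D" using elim(1) i w dD[OF i] by force
          qed
          have "(\<Sum>i<n. indicator (A i) \<omega> * \<xi> i \<omega> * normQ (Q i) y \<omega>) \<le> e \<omega>"
            by (rule pw_bound[OF H2 elim(4) Cpos Dpos \<delta>_def])
          then show ?case using elim(2,3) z by simp
        qed
        moreover have "f z \<in> borel_measurable M" by (rule fm)
        ultimately have "f z \<in> U" using e(3) by blast
        then show "z \<in> {x \<in> UNIV. f x \<in> U}" by simp
      qed
      show "\<exists>Q \<epsilon> lam. finite Q \<and> Q \<subseteq> P \<and> 0 < \<epsilon> \<and> 0 < lam \<and> lam < 1 \<and>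
         (\<lambda>y. x + y) ` eps_lambda_nbhd M Q \<epsilon> lam \<subseteq> {x \<in> UNIV. f x \<in> U}"
        using Q'f Q'P dpos lpos l1 sub by blast
    qed
  qed
qed

lemma dir_cont_to_bound:
  fixes M :: "'a measure"
    and sm :: "('a \<Rightarrow> 'k::{real_normed_field,second_countable_topology}) \<Rightarrow> 'e::ab_group_add \<Rightarrow> 'e"
    and P :: "('e \<Rightarrow> 'a \<Rightarrow> real) set"
    and f :: "'e \<Rightarrow> 'a \<Rightarrow> 'k"
  assumes M: "prob_space M" and atomic: "ess_purely_atomic M"
    and rlc: "random_lc_module M sm P" and hom: "is_L0_hom M sm f"
    and cont: "continuous_map (T_eps_lambda M P) (T_c_L0 M) f"
  shows "\<exists>n::nat. \<exists>A :: nat \<Rightarrow> 'a set. \<exists>\<xi> :: nat \<Rightarrow> 'a \<Rightarrow> real. \<exists>Q :: nat \<Rightarrow> ('e \<Rightarrow> 'a \<Rightarrow> real) set.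
       (\<forall>i<n. P_atom M (A i) \<and> \<xi> i \<in> borel_measurable M \<and> (AE \<omega> in M. 0 \<le> \<xi> i \<omega>) \<and>
              finite (Q i) \<and> Q i \<subseteq> P) \<and>
       (\<forall>x. AE \<omega> in M. norm (f x \<omega>) \<le> (\<Sum>i<n. indicator (A i) \<omega> * \<xi> i \<omega> * normQ (Q i) x \<omega>))"
proof -
  interpret prob_space M by (rule M)
  have meas: "\<forall>p\<in>P. \<forall>x. p x \<in> borel_measurable M" by (rule rlc_meas[OF rlc])
  have fm: "\<And>x. f x \<in> borel_measurable M" using hom unfolding is_L0_hom_def by blast
  have fsc: "\<And>t x. t \<in> borel_measurable M \<Longrightarrow> AE \<omega> in M. f (sm t x) \<omega> = t \<omega> * f x \<omega>"
    using hom unfolding is_L0_hom_def by blast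
  define G where "G = {y :: 'a \<Rightarrow> 'k. y \<in> borel_measurable M \<and> (AE \<omega> in M. norm (y \<omega>) < 1)}"
  have Gopen: "openin (T_c_L0 M) G"
    unfolding openin_Tc
  proof (intro conjI ballI)
    show "G \<subseteq> borel_measurable M" unfolding G_def by blast
    fix y assume y: "y \<in> G"
    have ym: "y \<in> borel_measurable M" and y1: "AE \<omega> in M. norm (y \<omega>) < 1" using y unfolding G_def by auto
    have em: "(\<lambda>\<omega>. (1 - norm (y \<omega>)) / 2) \<in> borel_measurable M" using ym by measurable
    have ep: "AE \<omega> in M. 0 < (1 - norm (y \<omega>)) / 2" using y1 by eventually_elim simp
    have esub: "{z \<in> borel_measurable M. AE \<omega> in M. norm (z \<omega> - y \<omega>) \<le> (1 - norm (y \<omega>)) / 2} \<subseteq> G"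
    proof
      fix z assume z: "z \<in> {z \<in> borel_measurable M. AE \<omega> in M. norm (z \<omega> - y \<omega>) \<le> (1 - norm (y \<omega>)) / 2}"
      have zae: "AE \<omega> in M. norm (z \<omega> - y \<omega>) \<le> (1 - norm (y \<omega>)) / 2" using z by simp
      have "AE \<omega> in M. norm (z \<omega>) < 1"
        using zae y1
      proof eventually_elim
        case (elim \<omega>)
        have "norm (z \<omega>) \<le> norm (y \<omega>) + norm (z \<omega> - y \<omega>)" by (metis norm_triangle_sub add.commute)
        also have "\<dots> \<le> norm (y \<omega>) + (1 - norm (y \<omega>)) / 2" using elim(1) by simp
        also have "\<dots> < 1" using elim(2) by (simp add: field_simps)
        finally show ?case .
      qed
      then show "z \<in> G" using z unfolding G_def by blast
    qed
    show "\<exists>\<epsilon>\<in>borel_measurable M. (AE \<omega> in M. 0 < \<epsilon> \<omega>) \<and>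
        {z \<in> borel_measurable M. AE \<omega> in M. norm (z \<omega> - y \<omega>) \<le> \<epsilon> \<omega>} \<subseteq> G"
      by (rule bexI[OF _ em]) (use ep esub in simp)
  qed
  have "openin (T_eps_lambda M P) {x \<in> topspace (T_eps_lambda M P). f x \<in> G}"
    using cont Gopen unfolding continuous_map_def by blast
  then have op: "openin (T_eps_lambda M P) {x. f x \<in> G}" by (simp add: topspace_Te[OF M meas])
  have "f 0 \<in> G"
  proof -
    have "AE \<omega> in M. norm (f 0 \<omega>) < 1" using f_zero[OF hom] by eventually_elim simp
    then show ?thesis unfolding G_def using fm by blast
  qed
  then have "0 \<in> {x. f x \<in> G}" by simp
  from bspec[OF op[unfolded openin_Te[OF M meas]] this]
  obtain Q \<epsilon> lam where Q: "finite Q" "Q \<subseteq> P" and e: "0 < \<epsilon>" and lam: "0 < lam" "lam < 1"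
    and nb: "(\<lambda>y. 0 + y) ` eps_lambda_nbhd M Q \<epsilon> lam \<subseteq> {x. f x \<in> G}"
    by blast
  have small: "AE \<omega> in M. norm (f y \<omega>) < 1" if "y \<in> eps_lambda_nbhd M Q \<epsilon> lam" for y
  proof -
    have "0 + y \<in> (\<lambda>y. 0 + y) ` eps_lambda_nbhd M Q \<epsilon> lam" using that by (rule imageI)
    then have "f (0 + y) \<in> G" using nb by blast
    then show ?thesis unfolding G_def by simp
  qed
  obtain \<A> where \<A>: "countable \<A>" "\<forall>A\<in>\<A>. P_atom M A" "\<Union>\<A> = space M"
    using atomic unfolding ess_purely_atomic_def by blast
  have Ane: "\<A> \<noteq> {}" using \<A>(3) not_empty by auto
  define At where "At = from_nat_into \<A>"
  have Atin: "At i \<in> \<A>" for i unfolding At_def by (rule from_nat_into[OF Ane])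
  have Ats: "At i \<in> sets M" for i using \<A>(2) Atin unfolding P_atom_def by blast
  have rng: "range At = \<A>" unfolding At_def by (rule range_from_nat_into[OF Ane \<A>(1)])
  define UU where "UU k = (\<Union>i<k. At i)" for k
  have UUs: "UU k \<in> sets M" for k unfolding UU_def using Ats by auto
  have UUinc: "incseq UU" unfolding incseq_def UU_def by (auto intro: order.strict_trans2)
  have UUun: "(\<Union>k. UU k) = space M"
  proof -
    have "(\<Union>k. UU k) = (\<Union>i. At i)" unfolding UU_def by auto
    also have "\<dots> = \<Union>\<A>" using rng by auto
    finally show ?thesis using \<A>(3) by simp
  qed
  have "(\<lambda>k. measure M (UU k)) \<longlonglongrightarrow> measure M (space M)"
    using finite_Lim_measure_incseq[of UU] UUs UUinc UUun by auto
  then have "(\<lambda>k. measure M (UU k)) \<longlonglongrightarrow> 1" using prob_space by simp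
  from order_tendstoD(1)[OF this, of "1 - lam"] lam obtain N where N: "measure M (UU N) > 1 - lam"
    by (auto simp: eventually_sequentially)
  show ?thesis
  proof (intro exI[of _ N] exI[of _ At] exI[of _ "\<lambda>i \<omega>. 2 / \<epsilon>"] exI[of _ "\<lambda>i. Q"] conjI allI impI)
    fix i assume "i < N"
    show "P_atom M (At i)" using \<A>(2) Atin by blast
    show "(\<lambda>\<omega>. 2 / \<epsilon>) \<in> borel_measurable M" by simp
    show "AE \<omega> in M. 0 \<le> 2 / \<epsilon>" using e by simp
    show "finite Q" by (rule Q(1))
    show "Q \<subseteq> P" by (rule Q(2))
  next
    fix x
    define nq where "nq = normQ Q x"
    have nqm[measurable]: "nq \<in> borel_measurable M" unfolding nq_def by (rule normQ_meas'[OF rlc Q])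
    have UNs[measurable]: "UU N \<in> sets M" by (rule UUs)
    define r where "r m \<omega> = (if \<omega> \<in> UU N then (if 0 < nq \<omega> then \<epsilon> / (2 * nq \<omega>) else real m) else real m)" for m :: nat and \<omega>
    have rm: "r m \<in> borel_measurable M" for m unfolding r_def by measurable
    define t where "t m \<omega> = (of_real (r m \<omega>) :: 'k)" for m \<omega>
    have tm: "t m \<in> borel_measurable M" for m unfolding t_def using rm[of m] by measurable
    have key: "AE \<omega> in M. \<bar>r m \<omega>\<bar> * norm (f x \<omega>) < 1" for m
    proof -
      have sc: "AE \<omega> in M. normQ Q (sm (t m) x) \<omega> = norm (t m \<omega>) * nq \<omega>"
        unfolding nq_def by (rule normQ_sm[OF rlc Q tm])
      have inS: "AE \<omega> in M. \<omega> \<in> UU N \<longrightarrow> \<omega> \<in> {\<omega>\<in>space M. normQ Q (sm (t m) x) \<omega> < \<epsilon>}"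
        using sc AE_space
      proof eventually_elim
        case (elim \<omega>)
        show ?case
        proof
          assume w: "\<omega> \<in> UU N"
          have nn: "0 \<le> nq \<omega>" unfolding nq_def by (rule normQ_nonneg[OF Q(1)])
          have "normQ Q (sm (t m) x) \<omega> < \<epsilon>"
          proof (cases "0 < nq \<omega>")
            case True
            have n1: "norm (t m \<omega>) = \<bar>r m \<omega>\<bar>" unfolding t_def by (rule norm_of_real)
            have n2: "r m \<omega> = \<epsilon> / (2 * nq \<omega>)" unfolding r_def using w True by simp
            have n3: "\<bar>\<epsilon> / (2 * nq \<omega>)\<bar> = \<epsilon> / (2 * nq \<omega>)" using True e by simp
            have "normQ Q (sm (t m) x) \<omega> = \<epsilon> / (2 * nq \<omega>) * nq \<omega>"
              by (simp only: elim(1) n1 n2 n3)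
            also have "\<dots> = \<epsilon> / 2" using True by simp
            finally show ?thesis using e by simp
          next
            case False
            then have "nq \<omega> = 0" using nn by simp
            then show ?thesis using elim(1) e by simp
          qed
          then show "\<omega> \<in> {\<omega>\<in>space M. normQ Q (sm (t m) x) \<omega> < \<epsilon>}" using elim(2) by simp
        qed
      qed
      have nqs: "normQ Q (sm (t m) x) \<in> borel_measurable M" by (rule normQ_meas'[OF rlc Q])
      have Ss: "{\<omega>\<in>space M. normQ Q (sm (t m) x) \<omega> < \<epsilon>} \<in> sets M" using nqs by measurable
      have "measure M (UU N) \<le> measure M {\<omega>\<in>space M. normQ Q (sm (t m) x) \<omega> < \<epsilon>}"
        by (rule finite_measure_mono_AE[OF inS Ss])
      then have "sm (t m) x \<in> eps_lambda_nbhd M Q \<epsilon> lam" using N unfolding eps_lambda_nbhd_def by simp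
      then have "AE \<omega> in M. norm (f (sm (t m) x) \<omega>) < 1" by (rule small)
      then show ?thesis using fsc[OF tm[of m], of x]
      proof eventually_elim
        case (elim \<omega>)
        then show ?case unfolding t_def by (simp add: norm_mult)
      qed
    qed
    have "AE \<omega> in M. \<forall>m. \<bar>r m \<omega>\<bar> * norm (f x \<omega>) < 1" using key by (simp add: AE_all_countable)
    then show "AE \<omega> in M. norm (f x \<omega>) \<le> (\<Sum>i<N. indicator (At i) \<omega> * (2 / \<epsilon>) * normQ Q x \<omega>)"
    proof eventually_elim
      case (elim \<omega>)
      show ?case unfolding nq_def[symmetric]
      proof (rule pw2[where inU = "\<omega> \<in> UU N"])
        show "\<forall>m::nat. \<bar>(if \<omega> \<in> UU N then (if 0 < nq \<omega> then \<epsilon> / (2 * nq \<omega>) else real m) else real m)\<bar> * norm (f x \<omega>) < 1"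
          using elim unfolding r_def by simp
        show "0 \<le> norm (f x \<omega>)" by simp
        show "0 \<le> nq \<omega>" unfolding nq_def by (rule normQ_nonneg[OF Q(1)])
        show "0 < \<epsilon>" by (rule e)
        show "(\<omega> \<in> UU N) = (\<exists>j<N. \<omega> \<in> At j)" unfolding UU_def by blast
      qed
    qed
  qed
qed

theorem lemma3p7:
  fixes M :: "'a measure"
    and sm :: "('a \<Rightarrow> 'k::{real_normed_field,second_countable_topology}) \<Rightarrow> 'e::ab_group_add \<Rightarrow> 'e"
    and \<P> :: "('e \<Rightarrow> 'a \<Rightarrow> real) set"
    and f :: "'e \<Rightarrow> 'a \<Rightarrow> 'k"
  assumes "prob_space M"
    and "ess_purely_atomic M"
    and "random_lc_module M sm \<P>"
    and "is_L0_hom M sm f"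
  shows "continuous_map (T_eps_lambda M \<P>) (T_c_L0 M) f \<longleftrightarrow>
    (\<exists>n::nat. \<exists>A :: nat \<Rightarrow> 'a set. \<exists>\<xi> :: nat \<Rightarrow> 'a \<Rightarrow> real. \<exists>Q :: nat \<Rightarrow> ('e \<Rightarrow> 'a \<Rightarrow> real) set.
       (\<forall>i<n. P_atom M (A i) \<and> \<xi> i \<in> borel_measurable M \<and> (AE \<omega> in M. 0 \<le> \<xi> i \<omega>) \<and>
              finite (Q i) \<and> Q i \<subseteq> \<P>) \<and>
       (\<forall>x. AE \<omega> in M. norm (f x \<omega>) \<le> (\<Sum>i<n. indicator (A i) \<omega> * \<xi> i \<omega> * normQ (Q i) x \<omega>)))"
proof
  assume c: "continuous_map (T_eps_lambda M \<P>) (T_c_L0 M) f"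
  show "\<exists>n::nat. \<exists>A :: nat \<Rightarrow> 'a set. \<exists>\<xi> :: nat \<Rightarrow> 'a \<Rightarrow> real. \<exists>Q :: nat \<Rightarrow> ('e \<Rightarrow> 'a \<Rightarrow> real) set.
       (\<forall>i<n. P_atom M (A i) \<and> \<xi> i \<in> borel_measurable M \<and> (AE \<omega> in M. 0 \<le> \<xi> i \<omega>) \<and>
              finite (Q i) \<and> Q i \<subseteq> \<P>) \<and>
       (\<forall>x. AE \<omega> in M. norm (f x \<omega>) \<le> (\<Sum>i<n. indicator (A i) \<omega> * \<xi> i \<omega> * normQ (Q i) x \<omega>))"
    by (rule dir_cont_to_bound[OF assms(1-4) c])
next
  assume "\<exists>n::nat. \<exists>A :: nat \<Rightarrow> 'a set. \<exists>\<xi> :: nat \<Rightarrow> 'a \<Rightarrow> real. \<exists>Q :: nat \<Rightarrow> ('e \<Rightarrow> 'a \<Rightarrow> real) set.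
       (\<forall>i<n. P_atom M (A i) \<and> \<xi> i \<in> borel_measurable M \<and> (AE \<omega> in M. 0 \<le> \<xi> i \<omega>) \<and>
              finite (Q i) \<and> Q i \<subseteq> \<P>) \<and>
       (\<forall>x. AE \<omega> in M. norm (f x \<omega>) \<le> (\<Sum>i<n. indicator (A i) \<omega> * \<xi> i \<omega> * normQ (Q i) x \<omega>))"
  then obtain n and A :: "nat \<Rightarrow> 'a set" and \<xi> :: "nat \<Rightarrow> 'a \<Rightarrow> real" and Q :: "nat \<Rightarrow> ('e \<Rightarrow> 'a \<Rightarrow> real) set"
    where H: "\<forall>i<n. P_atom M (A i) \<and> \<xi> i \<in> borel_measurable M \<and> (AE \<omega> in M. 0 \<le> \<xi> i \<omega>) \<and>
              finite (Q i) \<and> Q i \<subseteq> \<P>"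
      and B: "\<forall>x. AE \<omega> in M. norm (f x \<omega>) \<le> (\<Sum>i<n. indicator (A i) \<omega> * \<xi> i \<omega> * normQ (Q i) x \<omega>)"
    by blast
  show "continuous_map (T_eps_lambda M \<P>) (T_c_L0 M) f"
    by (rule dir_bound_to_cont[OF assms(1) assms(3) assms(4) H B])
qed

end
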